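(* Let $\mathcal{V}$ and $\mathcal{W}$ be quaternionic two-sided Banach algebras with unit $1\neq 0$, let $\mathcal{A}:\mathcal{V}\to\mathcal{W}$ be a homomorphism, and let $a\in\mathcal{V}^{-1}$. Then $$\sigma_{S,\mathcal{A}}^{\Phi}(a^{-1})=\left\{\frac{\overline{q}}{|q|^{2}}:\ q\in \sigma_{S,\mathcal{A}}^{\Phi}(a)\right\}\quad\text{and}\quad \sigma_{S,\mathcal{A}}^{\Phi^{0}}(a^{-1})=\left\{\frac{\overline{q}}{|q|^{2}}:\ q\in \sigma_{S,\mathcal{A}}^{\Phi^{0}}(a)\right\}.$$
   Context: $\mathbb{H}$ denotes the quaternions; $\overline{q}$ is the quaternionic conjugate, $Re(q)$ the real part, $|q|$ the norm. A quaternionic two-sided Banach algebra with unit is a two-sided $\mathbb{H}$-vector space $\mathcal{V}$ with an associative product satisfying $x(y+z)=xy+xz$, $(x+y)z=xz+yz$, $q(xy)=(qx)y$, $(xy)q=x(yq)$, complete with respect to a norm with $\|qx\|=|q|\|x\|=\|xq\|$, $\|xy\|\le\|x\|\|y\|$, and with unit $1_{\mathcal{V}}$, $\|1_{\mathcal{V}}\|=1$. A homomorphism $\mathcal{A}:\mathcal{V}\to\mathcal{W}$ is additive, multiplicative, satisfies $\mathcal{A}(qu)=q\mathcal{A}(u)$, $\mathcal{A}(uq)=\mathcal{A}(u)q$ and $\mathcal{A}(1_{\mathcal{V}})=1_{\mathcal{W}}$. $\mathcal{V}^{-1}$ is the group of invertible elements. For $v\in\mathcal{V}$, $q\in\mathbb{H}$,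 $R_q(v)=v^2-2Re(q)v+|q|^21_{\mathcal{V}}$. $\Phi_{\mathcal{A}}=\{v:\mathcal{A}(v)\in\mathcal{W}^{-1}\}$, $\Phi^0_{\mathcal{A}}=\mathcal{V}^{-1}+\mathcal{A}^{-1}(0)$, $\sigma_{S,\mathcal{A}}^{\Phi}(v)=\{q\in\mathbb{H}:R_q(v)\notin\Phi_{\mathcal{A}}\}$, $\sigma_{S,\mathcal{A}}^{\Phi^0}(v)=\{q\in\mathbb{H}:R_q(v)\notin\Phi^0_{\mathcal{A}}\}$. *)

theory Defs
  imports Complex_Main
begin

datatype quat = Quat (qRe: real) (qI: real) (qJ: real) (qK: real)

definition qadd :: "quat \<Rightarrow> quat \<Rightarrow> quat" where
  "qadd p q = Quat (qRe p + qRe q) (qI p + qI q) (qJ p + qJ q) (qK p + qK q)"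

definition qmult :: "quat \<Rightarrow> quat \<Rightarrow> quat" where
  "qmult p q = Quat
     (qRe p * qRe q - qI p * qI q - qJ p * qJ q - qK p * qK q)
     (qRe p * qI q + qI p * qRe q + qJ p * qK q - qK p * qJ q)
     (qRe p * qJ q - qI p * qK q + qJ p * qRe q + qK p * qI q)
     (qRe p * qK q + qI p * qJ q - qJ p * qI q + qK p * qRe q)"

definition qreal :: "real \<Rightarrow> quat" where
  "qreal r = Quat r 0 0 0"

definition qconj :: "quat \<Rightarrow> quat" where
  "qconj q = Quat (qRe q) (- qI q) (- qJ q) (- qK q)"

definition qnorm :: "quat \<Rightarrow> real" where
  "qnorm q = sqrt ((qRe q)\<^sup>2 + (qI q)\<^sup>2 + (qJ q)\<^sup>2 + (qK q)\<^sup>2)"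

definition qconj_div_normsq :: "quat \<Rightarrow> quat" where
  "qconj_div_normsq q = (let s = (qnorm q)\<^sup>2 in
     Quat (qRe q / s) (- qI q / s) (- qJ q / s) (- qK q / s))"

text \<open>The carrier is a type 'v with its ring structure (associative product,
  distributivity, unit, 0 \<noteq> 1) from class ring_1; the left and right
  quaternionic scalar multiplications lm, rm and the norm nm are explicit.\<close>

definition qbanach_algebra ::
  "(quat \<Rightarrow> 'v::ring_1 \<Rightarrow> 'v) \<Rightarrow> ('v \<Rightarrow> quat \<Rightarrow> 'v) \<Rightarrow> ('v \<Rightarrow> real) \<Rightarrow> bool" where
  "qbanach_algebra lm rm nm \<longleftrightarrow>
     \<comment> \<open>two-sided quaternionic vector space\<close>
     (\<forall>q x y. lm q (x + y) = lm q x + lm q y) \<and>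
     (\<forall>p q x. lm (qadd p q) x = lm p x + lm q x) \<and>
     (\<forall>p q x. lm (qmult p q) x = lm p (lm q x)) \<and>
     (\<forall>x. lm (qreal 1) x = x) \<and>
     (\<forall>q x y. rm (x + y) q = rm x q + rm y q) \<and>
     (\<forall>p q x. rm x (qadd p q) = rm x p + rm x q) \<and>
     (\<forall>p q x. rm x (qmult p q) = rm (rm x p) q) \<and>
     (\<forall>x. rm x (qreal 1) = x) \<and>
     (\<forall>p q x. rm (lm p x) q = lm p (rm x q)) \<and>
     \<comment> \<open>compatibility of the product with scalars\<close>
     (\<forall>q x y. lm q (x * y) = (lm q x) * y) \<and>
     (\<forall>q x y. rm (x * y) q = x * (rm y q)) \<and>
     \<comment> \<open>norm\<close>
     (\<forall>x. nm x = 0 \<longleftrightarrow> x = 0) \<and>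
     (\<forall>x y. nm (x + y) \<le> nm x + nm y) \<and>
     (\<forall>q x. nm (lm q x) = qnorm q * nm x) \<and>
     (\<forall>q x. nm (rm x q) = qnorm q * nm x) \<and>
     (\<forall>x y. nm (x * y) \<le> nm x * nm y) \<and>
     nm 1 = 1 \<and>
     \<comment> \<open>completeness\<close>
     (\<forall>s::nat \<Rightarrow> 'v.
        (\<forall>e>0. \<exists>N. \<forall>m\<ge>N. \<forall>n\<ge>N. nm (s m - s n) < e) \<longrightarrow>
        (\<exists>l. (\<lambda>n. nm (s n - l)) \<longlonglongrightarrow> 0))"

definition qhom ::
  "(quat \<Rightarrow> 'v::ring_1 \<Rightarrow> 'v) \<Rightarrow> ('v \<Rightarrow> quat \<Rightarrow> 'v) \<Rightarrow>
   (quat \<Rightarrow> 'w::ring_1 \<Rightarrow> 'w) \<Rightarrow> ('w \<Rightarrow> quat \<Rightarrow> 'w) \<Rightarrow> ('v \<Rightarrow> 'w) \<Rightarrow> bool" where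
  "qhom lV rV lW rW A \<longleftrightarrow>
     (\<forall>u v. A (u + v) = A u + A v) \<and>
     (\<forall>u v. A (u * v) = A u * A v) \<and>
     (\<forall>q u. A (lV q u) = lW q (A u)) \<and>
     (\<forall>q u. A (rV u q) = rW (A u) q) \<and>
     A 1 = 1"

definition invertibles :: "'v::ring_1 set" where
  "invertibles = {x. \<exists>y. x * y = 1 \<and> y * x = 1}"

definition ring_inv :: "'v::ring_1 \<Rightarrow> 'v" where
  "ring_inv x = (THE y. x * y = 1 \<and> y * x = 1)"

definition Rq :: "(quat \<Rightarrow> 'v::ring_1 \<Rightarrow> 'v) \<Rightarrow> quat \<Rightarrow> 'v \<Rightarrow> 'v" where
  "Rq lm q v = v * v - lm (qreal (2 * qRe q)) v + lm (qreal ((qnorm q)\<^sup>2)) 1"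

definition Phi :: "('v::ring_1 \<Rightarrow> 'w::ring_1) \<Rightarrow> 'v set" where
  "Phi A = {v. A v \<in> invertibles}"

definition Phi0 :: "('v::ring_1 \<Rightarrow> 'w::ring_1) \<Rightarrow> 'v set" where
  "Phi0 A = {u + k | u k. u \<in> invertibles \<and> A k = 0}"

definition S_spec_Phi ::
  "(quat \<Rightarrow> 'v::ring_1 \<Rightarrow> 'v) \<Rightarrow> ('v \<Rightarrow> 'w::ring_1) \<Rightarrow> 'v \<Rightarrow> quat set" where
  "S_spec_Phi lm A v = {q. Rq lm q v \<notin> Phi A}"

definition S_spec_Phi0 ::
  "(quat \<Rightarrow> 'v::ring_1 \<Rightarrow> 'v) \<Rightarrow> ('v \<Rightarrow> 'w::ring_1) \<Rightarrow> 'v \<Rightarrow> quat set" where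
  "S_spec_Phi0 lm A v = {q. Rq lm q v \<notin> Phi0 A}"

end

theory Submission
  imports Defs
begin

lemma qmult_real: "qmult (qreal r) (qreal s) = qreal (r * s)"
  by (simp add: qmult_def qreal_def)

lemma qadd_real: "qadd (qreal r) (qreal s) = qreal (r + s)"
  by (simp add: qadd_def qreal_def)

lemma lm_facts:
  assumes "qbanach_algebra lm rm nm"
  shows "\<And>q x y. lm q (x + y) = lm q x + lm q y"
    and "\<And>r s x. lm (qreal r) (lm (qreal s) x) = lm (qreal (r * s)) x"
    and "\<And>x. lm (qreal 1) x = x"
    and "\<And>q x y. lm q x * y = lm q (x * y)"
    and "\<And>p q x. lm (qadd p q) x = lm p x + lm q x"
  using assms unfolding qbanach_algebra_def
  by (auto simp flip: qmult_real)

lemma lm_diff: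
  assumes "qbanach_algebra lm rm nm"
  shows "lm q (x - y) = lm q x - lm q y"
proof -
  have "lm q (x - y) + lm q y = lm q x"
    using lm_facts(1)[OF assms, of q "x - y" y] by simp
  then show ?thesis by (simp add: eq_diff_eq)
qed

lemma lm_zero:
  assumes "qbanach_algebra lm rm nm"
  shows "lm q 0 = 0"
  using lm_facts(1)[OF assms, of q 0 0] by simp

lemma lm_real0:
  assumes "qbanach_algebra lm rm nm"
  shows "lm (qreal 0) x = 0"
proof -
  have "lm (qadd (qreal 0) (qreal 0)) x = lm (qreal 0) x + lm (qreal 0) x"
    using lm_facts(5)[OF assms] by blast
  then show ?thesis by (simp add: qadd_real)
qed

lemma inv_mult:
  assumes "u \<in> invertibles" "w \<in> invertibles"
  shows "u * w \<in> invertibles"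
proof -
  obtain u' where u: "u * u' = 1" "u' * u = 1" using assms(1) by (auto simp: invertibles_def)
  obtain w' where w: "w * w' = 1" "w' * w = 1" using assms(2) by (auto simp: invertibles_def)
  have "(u * w) * (w' * u') = u * (w * w') * u'" by (simp add: mult.assoc)
  hence "(u * w) * (w' * u') = 1" using u w by simp
  moreover have "(w' * u') * (u * w) = w' * (u' * u) * w" by (simp add: mult.assoc)
  hence "(w' * u') * (u * w) = 1" using u w by simp
  ultimately show ?thesis by (auto simp: invertibles_def)
qed

lemma hom_facts:
  assumes "qhom lV rV lW rW A"
  shows "A (x * y) = A x * A y" "A 0 = 0" "A (x + y) = A x + A y" "A 1 = 1"
  using assms unfolding qhom_def apply auto
  by (metis add_cancel_right_right add_0)

lemma hom_inv:
  assumes "qhom lV rV lW rW A" "u \<in> invertibles"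
  shows "A u \<in> invertibles"
proof -
  obtain u' where u: "u * u' = 1" "u' * u = 1" using assms(2) by (auto simp: invertibles_def)
  have "A u * A u' = 1" "A u' * A u = 1"
    using hom_facts(1,4)[OF assms(1)] u by metis+
  then show ?thesis unfolding invertibles_def by blast
qed

lemma Phi_mult:
  assumes "qhom lV rV lW rW A" "u \<in> invertibles" "w \<in> invertibles" "x \<in> Phi A"
  shows "u * x * w \<in> Phi A"
proof -
  have "A (u * x * w) = A u * A x * A w" using hom_facts(1)[OF assms(1)] by simp
  moreover have "A u * A x * A w \<in> invertibles"
    using assms(4) hom_inv[OF assms(1) assms(2)] hom_inv[OF assms(1) assms(3)]
    unfolding Phi_def by (intro inv_mult) simp_all
  ultimately show ?thesis unfolding Phi_def by simp
qed

lemma Phi0_mult: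
  assumes "qhom lV rV lW rW A" "u \<in> invertibles" "w \<in> invertibles" "x \<in> Phi0 A"
  shows "u * x * w \<in> Phi0 A"
proof -
  obtain v k where x: "x = v + k" "v \<in> invertibles" "A k = 0" using assms(4) by (auto simp: Phi0_def)
  have "u * x * w = u * v * w + u * k * w" by (simp add: x algebra_simps)
  moreover have "u * v * w \<in> invertibles" using inv_mult assms x by blast
  moreover have "A (u * k * w) = 0" using hom_facts[OF assms(1)] x by simp
  ultimately show ?thesis unfolding Phi0_def by blast
qed

lemma both_mult:
  assumes "qhom lV rV lW rW A" "u \<in> invertibles" "w \<in> invertibles"
  shows "u * x * w \<in> Phi A \<longleftrightarrow> x \<in> Phi A" "u * x * w \<in> Phi0 A \<longleftrightarrow> x \<in> Phi0 A"
proof -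
  obtain u' where u: "u * u' = 1" "u' * u = 1" using assms(2) by (auto simp: invertibles_def)
  obtain w' where w: "w * w' = 1" "w' * w = 1" using assms(3) by (auto simp: invertibles_def)
  have u': "u' \<in> invertibles" "w' \<in> invertibles" using u w by (auto simp: invertibles_def)
  have "u' * (u * x * w) * w' = (u' * u) * x * (w * w')" by (simp add: mult.assoc)
  hence e: "u' * (u * x * w) * w' = x" using u w by simp
  show "u * x * w \<in> Phi A \<longleftrightarrow> x \<in> Phi A"
    using Phi_mult[OF assms(1) u'(1) u'(2), of "u * x * w"] Phi_mult[OF assms] e by auto
  show "u * x * w \<in> Phi0 A \<longleftrightarrow> x \<in> Phi0 A"
    using Phi0_mult[OF assms(1) u'(1) u'(2), of "u * x * w"] Phi0_mult[OF assms] e by auto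
qed

definition nsq :: "quat \<Rightarrow> real" where
  "nsq q = (qRe q)\<^sup>2 + (qI q)\<^sup>2 + (qJ q)\<^sup>2 + (qK q)\<^sup>2"

lemma qnorm_sq: "(qnorm q)\<^sup>2 = nsq q"
  unfolding qnorm_def nsq_def by (simp add: add_nonneg_nonneg)

lemma nsq_zero: "nsq q = 0 \<longleftrightarrow> q = Quat 0 0 0 0"
  unfolding nsq_def by (cases q) (auto simp: add_nonneg_eq_0_iff)

lemma f_eq: "qconj_div_normsq q = Quat (qRe q / nsq q) (- qI q / nsq q) (- qJ q / nsq q) (- qK q / nsq q)"
  by (simp add: qconj_div_normsq_def qnorm_sq Let_def)

lemma f_facts:
  assumes "q \<noteq> Quat 0 0 0 0"
  shows "qRe (qconj_div_normsq q) = qRe q / nsq q"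
    "nsq (qconj_div_normsq q) = 1 / nsq q"
    "qconj_div_normsq (qconj_div_normsq q) = q"
    "qconj_div_normsq q \<noteq> Quat 0 0 0 0"
proof -
  have n: "nsq q \<noteq> 0" using assms nsq_zero by blast
  show 1: "qRe (qconj_div_normsq q) = qRe q / nsq q"
    by (simp add: f_eq)
  have "nsq (qconj_div_normsq q) = nsq q / (nsq q)\<^sup>2"
    unfolding f_eq nsq_def[of "Quat _ _ _ _"] by (simp add: power_divide add_divide_distrib nsq_def)
  also have "\<dots> = 1 / nsq q" using n by (simp add: power2_eq_square)
  finally show 2: "nsq (qconj_div_normsq q) = 1 / nsq q" .
  have "nsq (qconj_div_normsq q) \<noteq> 0" using 2 n by simp
  then show "qconj_div_normsq q \<noteq> Quat 0 0 0 0" using nsq_zero by blast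
  show "qconj_div_normsq (qconj_div_normsq q) = q"
    using n unfolding f_eq[of "qconj_div_normsq q"] 2
    by (cases q) (simp add: f_eq)
qed

lemma key:
  assumes B: "qbanach_algebra lm rm nm" and ab: "a * b = 1" "b * a = 1"
    and q: "q \<noteq> Quat 0 0 0 0"
  shows "Rq lm q b = lm (qreal (nsq q)) 1 * Rq lm (qconj_div_normsq q) a * (b * b)"
proof -
  define c where "c = nsq q"
  have c: "c \<noteq> 0" using q nsq_zero unfolding c_def by simp
  define r where "r = 2 * (qRe q / c)"
  have p1: "qRe (qconj_div_normsq q) = qRe q / c" "(qnorm (qconj_div_normsq q))\<^sup>2 = 1 / c"
    using f_facts[OF q] qnorm_sq c_def by auto
  have aab: "a * a * (b * b) = 1"
    by (metis ab(1) mult.assoc mult_1_left)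
  have abb: "a * (b * b) = b" by (metis ab(1) mult.assoc mult_1_left)
  have "Rq lm (qconj_div_normsq q) a * (b * b)
      = a * a * (b * b) - lm (qreal r) a * (b * b) + lm (qreal (1 / c)) 1 * (b * b)"
    unfolding Rq_def p1 r_def by (simp add: algebra_simps)
  also have "\<dots> = 1 - lm (qreal r) b + lm (qreal (1 / c)) (b * b)"
    using aab abb lm_facts(4)[OF B] by simp
  finally have X: "Rq lm (qconj_div_normsq q) a * (b * b) = 1 - lm (qreal r) b + lm (qreal (1 / c)) (b * b)" .
  have "lm (qreal c) 1 * Rq lm (qconj_div_normsq q) a * (b * b)
      = lm (qreal c) (Rq lm (qconj_div_normsq q) a * (b * b))"
    using lm_facts(4)[OF B] by (simp add: mult.assoc)
  also have "\<dots> = lm (qreal c) 1 - lm (qreal (c * r)) b + lm (qreal (c * (1 / c))) (b * b)"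
    unfolding X using lm_facts(1,2)[OF B] lm_diff[OF B] by simp
  also have "\<dots> = lm (qreal c) 1 - lm (qreal (2 * qRe q)) b + b * b"
    using c lm_facts(3)[OF B] unfolding r_def by simp
  also have "\<dots> = Rq lm q b" unfolding Rq_def qnorm_sq c_def by simp
  finally show ?thesis unfolding c_def by simp
qed

lemma lmc_inv:
  assumes B: "qbanach_algebra lm rm nm" and c: "c \<noteq> 0"
  shows "lm (qreal c) 1 \<in> invertibles"
proof -
  have "lm (qreal c) 1 * lm (qreal (1/c)) 1 = 1" "lm (qreal (1/c)) 1 * lm (qreal c) 1 = 1"
    using lm_facts(2,3,4)[OF B] c by simp_all
  then show ?thesis unfolding invertibles_def by blast
qed

lemma ring_inv_props:
  assumes "a \<in> invertibles"
  shows "a * ring_inv a = 1" "ring_inv a * a = 1"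
proof -
  obtain y where y: "a * y = 1" "y * a = 1" using assms by (auto simp: invertibles_def)
  have u: "z = y" if z: "a * z = 1 \<and> z * a = 1" for z
  proof -
    have "z = (y * a) * z" using y(2) by simp
    also have "\<dots> = y * (a * z)" by (rule mult.assoc)
    also have "\<dots> = y" using z by simp
    finally show "z = y" .
  qed
  have "ring_inv a = y" unfolding ring_inv_def
    apply (rule the_equality)
    using y apply (rule conjI)
    using u by blast
  then show "a * ring_inv a = 1" "ring_inv a * a = 1" using y by simp_all
qed

lemma Rq_zero:
  assumes B: "qbanach_algebra lm rm nm"
  shows "Rq lm (Quat 0 0 0 0) v = v * v"
proof -
  have "qnorm (Quat 0 0 0 0) = 0" by (simp add: qnorm_def)
  then show ?thesis unfolding Rq_def using lm_real0[OF B] by simp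
qed

lemma inv_in_both:
  assumes H: "qhom lV rV lW rW A" and v: "v \<in> invertibles"
  shows "v \<in> Phi A" "v \<in> Phi0 A"
proof -
  show "v \<in> Phi A" using hom_inv[OF H v] unfolding Phi_def by simp
  have "v = v + 0" "A 0 = 0" using hom_facts(2)[OF H] by simp_all
  then show "v \<in> Phi0 A" using v unfolding Phi0_def by blast
qed

lemma set_lemma:
  assumes "Quat 0 0 0 0 \<notin> Sb" "Quat 0 0 0 0 \<notin> Sa"
    and "\<And>q. q \<noteq> Quat 0 0 0 0 \<Longrightarrow> q \<in> Sb \<longleftrightarrow> qconj_div_normsq q \<in> Sa"
  shows "Sb = qconj_div_normsq ` Sa"
proof
  show "Sb \<subseteq> qconj_div_normsq ` Sa"
  proof
    fix q assume q: "q \<in> Sb"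
    then have "q \<noteq> Quat 0 0 0 0" using assms(1) by metis
    then have "q = qconj_div_normsq (qconj_div_normsq q)" "qconj_div_normsq q \<in> Sa"
      using f_facts(3) assms(3) q by auto
    then show "q \<in> qconj_div_normsq ` Sa" by blast
  qed
  show "qconj_div_normsq ` Sa \<subseteq> Sb"
  proof
    fix q assume "q \<in> qconj_div_normsq ` Sa"
    then obtain p where p: "p \<in> Sa" "q = qconj_div_normsq p" by blast
    then have "p \<noteq> Quat 0 0 0 0" using assms(2) by metis
    then show "q \<in> Sb" using f_facts(3,4) assms(3) p by metis
  qed
qed

theorem mainTheorem2:
  fixes lV :: "quat \<Rightarrow> 'v::ring_1 \<Rightarrow> 'v" and rV :: "'v \<Rightarrow> quat \<Rightarrow> 'v"
    and nV :: "'v \<Rightarrow> real"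
    and lW :: "quat \<Rightarrow> 'w::ring_1 \<Rightarrow> 'w" and rW :: "'w \<Rightarrow> quat \<Rightarrow> 'w"
    and nW :: "'w \<Rightarrow> real"
    and A :: "'v \<Rightarrow> 'w" and a :: 'v
  assumes "qbanach_algebra lV rV nV"
    and "qbanach_algebra lW rW nW"
    and "qhom lV rV lW rW A"
    and "a \<in> invertibles"
  shows "S_spec_Phi lV A (ring_inv a) = qconj_div_normsq ` S_spec_Phi lV A a
       \<and> S_spec_Phi0 lV A (ring_inv a) = qconj_div_normsq ` S_spec_Phi0 lV A a"
proof -
  note B = assms(1) and H = assms(3)
  define b where "b = ring_inv a"
  have ab: "a * b = 1" "b * a = 1" using ring_inv_props[OF assms(4)] b_def by auto
  have bi: "b \<in> invertibles" using ab unfolding invertibles_def by blast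
  have aa: "a * a \<in> invertibles" using inv_mult assms(4) by blast
  have bb: "b * b \<in> invertibles" using inv_mult bi by blast
  have z: "Rq lV (Quat 0 0 0 0) a \<in> Phi A" "Rq lV (Quat 0 0 0 0) a \<in> Phi0 A"
       "Rq lV (Quat 0 0 0 0) b \<in> Phi A" "Rq lV (Quat 0 0 0 0) b \<in> Phi0 A"
    using Rq_zero[OF B] inv_in_both[OF H aa] inv_in_both[OF H bb] by simp_all
  have eq: "Rq lV q b \<in> Phi A \<longleftrightarrow> Rq lV (qconj_div_normsq q) a \<in> Phi A"
           "Rq lV q b \<in> Phi0 A \<longleftrightarrow> Rq lV (qconj_div_normsq q) a \<in> Phi0 A"
    if q: "q \<noteq> Quat 0 0 0 0" for q
  proof -
    have c: "nsq q \<noteq> 0" using q nsq_zero by simp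
    have K: "Rq lV q b = lV (qreal (nsq q)) 1 * Rq lV (qconj_div_normsq q) a * (b * b)"
      using key[OF B ab q] .
    show "Rq lV q b \<in> Phi A \<longleftrightarrow> Rq lV (qconj_div_normsq q) a \<in> Phi A"
      unfolding K using both_mult(1)[OF H lmc_inv[OF B c] bb] .
    show "Rq lV q b \<in> Phi0 A \<longleftrightarrow> Rq lV (qconj_div_normsq q) a \<in> Phi0 A"
      unfolding K using both_mult(2)[OF H lmc_inv[OF B c] bb] .
  qed
  have 1: "S_spec_Phi lV A b = qconj_div_normsq ` S_spec_Phi lV A a"
    by (rule set_lemma) (use z eq in \<open>auto simp: S_spec_Phi_def\<close>)
  have 2: "S_spec_Phi0 lV A b = qconj_div_normsq ` S_spec_Phi0 lV A a"
    by (rule set_lemma) (use z eq in \<open>auto simp: S_spec_Phi0_def\<close>)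
  show ?thesis using 1 2 b_def by simp
qed

end
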